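(* Define sequences $E=(E_n)_{n\ge1}$ and $Q=(q_n)_{n\ge1}$ by concatenating, for $m=1,2,3,\dots$, the block $(0,2,4,\dots,2m-2)$ of length $m$ for $E$ and the block $(2m,2m,\dots,2m)$ of length $m$ for $Q$; thus $E=(0,\,0,2,\,0,2,4,\,0,2,4,6,\dots)$ and $Q=(2,\,4,4,\,6,6,6,\,8,8,8,8,\dots)$. Let $x=\sum_{n=1}^\infty\frac{E_n}{q_1q_2\cdots q_n}$. Then $x$ is $Q$-distribution normal, but $x/2$ is not $Q$-distribution normal.
   Context: Let $T_{Q,n}(x)=\left(\prod_{j=1}^n q_j\right)x \bmod 1$. A real $x$ is $Q$-distribution normal if $(T_{Q,n}(x))_{n\ge0}$ is uniformly distributed modulo $1$. *)

theory Defs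
  imports Complex_Main
begin

definition uniformly_distributed_mod1 :: "(nat \<Rightarrow> real) \<Rightarrow> bool" where
  "uniformly_distributed_mod1 s \<longleftrightarrow>
     (\<forall>a b. 0 \<le> a \<and> a < b \<and> b \<le> 1 \<longrightarrow>
        (\<lambda>N. real (card {n. n < N \<and> a \<le> frac (s n) \<and> frac (s n) < b}) / real N)
          \<longlonglongrightarrow> b - a)"

text \<open>Q is a sequence of integers q_1, q_2, ... (index 0 unused).
  T_{Q,n}(x) = (q_1 \<cdots> q_n) x mod 1, for n \<ge> 0.\<close>
definition T_Q :: "(nat \<Rightarrow> nat) \<Rightarrow> nat \<Rightarrow> real \<Rightarrow> real" where
  "T_Q q n x = frac ((\<Prod>j=1..n. real (q j)) * x)"

definition Q_distribution_normal :: "(nat \<Rightarrow> nat) \<Rightarrow> real \<Rightarrow> bool" where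
  "Q_distribution_normal q x \<longleftrightarrow> uniformly_distributed_mod1 (\<lambda>n. T_Q q n x)"

definition Eblock :: "nat \<Rightarrow> nat list" where
  "Eblock m = map (\<lambda>i. 2 * i) [0..<m]"

definition Qblock :: "nat \<Rightarrow> nat list" where
  "Qblock m = replicate m (2 * m)"

text \<open>n-th term (n \<ge> 1) of the concatenation of blocks m = 1,2,3,...; the first n blocks
  already have total length \<ge> n, so it suffices to concatenate blocks 1..n.\<close>
definition Eseq :: "nat \<Rightarrow> nat" where
  "Eseq n = concat (map Eblock [1..<n+1]) ! (n - 1)"

definition Qseq :: "nat \<Rightarrow> nat" where
  "Qseq n = concat (map Qblock [1..<n+1]) ! (n - 1)"

definition x_ex :: real where
  "x_ex = (\<Sum>n. real (Eseq (Suc n)) / (\<Prod>j=1..Suc n. real (Qseq j)))"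

end

theory Submission
  imports Defs "HOL-Real_Asymp.Real_Asymp"
begin


fun Tri :: "nat \<Rightarrow> nat" where
  "Tri 0 = 0" | "Tri (Suc m) = Tri m + Suc m"

lemma Tri_ge: "m \<le> Tri m" by (induction m) auto

lemma Tri_decomp: "\<exists>m k. k \<le> m \<and> n = Tri m + k"
proof (induction n)
  case 0 show ?case by (rule exI[of _ 0]) auto
next
  case (Suc n)
  then obtain m k where "k \<le> m" "n = Tri m + k" by blast
  then show ?case
  proof (cases "k < m")
    case True thus ?thesis using \<open>n = Tri m + k\<close> by (intro exI[of _ m] exI[of _ "Suc k"]) auto
  next
    case False thus ?thesis using \<open>n = Tri m + k\<close> \<open>k \<le> m\<close> by (intro exI[of _ "Suc m"] exI[of _ 0]) auto
  qed
qed

lemma len_concat: "(\<And>i. length (f i) = i) \<Longrightarrow> length (concat (map f [1..<m+1])) = Tri m"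
  by (induction m) auto

lemma nth_blocks:
  assumes "\<And>i. length (f i) = i" "Suc m \<le> L" "k \<le> m"
  shows "concat (map f [1..<L+1]) ! (Tri m + k) = f (Suc m) ! k"
proof -
  have "[1..<L+1] = [1..<m+1] @ [m+1..<L+1]"
    using upt_add_eq_append[of 1 "m+1" "L - m"] assms by simp
  also have "[m+1..<L+1] = (m+1) # [m+2..<L+1]" using assms upt_conv_Cons by simp
  finally show ?thesis using assms len_concat[of f m] by (simp add: nth_append)
qed

lemma seq_vals:
  assumes "k \<le> m" "n = Tri m + k"
  shows "Eseq (Suc n) = 2 * k" "Qseq (Suc n) = 2 * Suc m"
proof -
  have L: "Suc m \<le> Suc n" using assms Tri_ge[of m] by simp
  show "Eseq (Suc n) = 2 * k"
    unfolding Eseq_def using nth_blocks[of Eblock m "Suc n" k] L assms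
    by (simp add: Eblock_def del: upt_Suc)
  show "Qseq (Suc n) = 2 * Suc m"
    unfolding Qseq_def using nth_blocks[of Qblock m "Suc n" k] L assms
    by (simp add: Qblock_def nth_Cons' del: upt_Suc replicate_Suc)
qed

lemma seq_props: "2 \<le> Qseq (Suc n)" "Eseq (Suc n) + 2 \<le> Qseq (Suc n)"
   "even (Qseq (Suc n))" "even (Eseq (Suc n))"
  using Tri_decomp[of n] seq_vals by fastforce+



definition PP :: "nat \<Rightarrow> real" where "PP N = (\<Prod>j=1..N. real (Qseq j))"
definition ff :: "nat \<Rightarrow> real" where "ff n = real (Eseq (Suc n)) / PP (Suc n)"

fun AA :: "nat \<Rightarrow> nat" where
  "AA 0 = 0" | "AA (Suc N) = Qseq (Suc N) * AA N + Eseq (Suc N)"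

definition RR :: "nat \<Rightarrow> real" where "RR N = PP N * x_ex - real (AA N)"

lemma x_ex_ff: "x_ex = suminf ff" unfolding x_ex_def ff_def PP_def by simp

lemma PP_Suc: "PP (Suc N) = PP N * real (Qseq (Suc N))"
  unfolding PP_def by (simp add: prod.nat_ivl_Suc' mult.commute)

lemma PP_0: "PP 0 = 1" unfolding PP_def by simp

lemma PP_pos: "PP N > 0"
proof (induction N)
  case 0 then show ?case by (simp add: PP_0)
next
  case (Suc N) then show ?case using seq_props(1)[of N] by (simp add: PP_Suc)
qed

lemma PP_ge: "PP N * 2 ^ k \<le> PP (N + k)"
proof (induction k)
  case 0 then show ?case by simp
next
  case (Suc k)
  have q: "2 \<le> real (Qseq (Suc (N + k)))" using seq_props(1)[of "N+k"] by simp
  have "0 \<le> PP N * 2 ^ k" using PP_pos[of N] by simp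
  have "PP N * 2 ^ Suc k = (PP N * 2^k) * 2" by simp
  also have "\<dots> \<le> PP (N + k) * real (Qseq (Suc (N + k)))"
    by (rule mult_mono) (use Suc q \<open>0 \<le> PP N * 2 ^ k\<close> in auto)
  finally show ?case by (simp add: PP_Suc)
qed


lemma ff_nonneg: "0 \<le> ff n" unfolding ff_def using PP_pos[of "Suc n"] by simp

lemma ff_le: "ff n \<le> 1 / PP n"
proof -
  have q: "real (Eseq (Suc n)) \<le> real (Qseq (Suc n))" using seq_props(2)[of n] by simp
  have qp: "real (Qseq (Suc n)) > 0" using seq_props(1)[of n] by simp
  have "ff n = real (Eseq (Suc n)) / (PP n * real (Qseq (Suc n)))" unfolding ff_def PP_Suc ..
  also have "\<dots> \<le> real (Qseq (Suc n)) / (PP n * real (Qseq (Suc n)))"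
    by (rule divide_right_mono) (use q PP_pos[of n] qp in auto)
  also have "\<dots> = 1 / PP n" using qp by simp
  finally show ?thesis .
qed

lemma ff_geom: "ff (k + N) \<le> (1 / PP N) * (1/2) ^ k"
proof -
  have "ff (k + N) \<le> 1 / PP (N + k)" using ff_le[of "N+k"] by (simp add: add.commute)
  also have "\<dots> \<le> 1 / (PP N * 2 ^ k)"
    by (rule divide_left_mono) (use PP_ge[of N k] PP_pos[of N] PP_pos[of "N+k"] in auto)
  also have "\<dots> = (1 / PP N) * (1/2) ^ k" by (simp add: power_one_over)
  finally show ?thesis .
qed

lemma summable_shift: "summable (\<lambda>k. ff (k + N))"
  by (rule summable_comparison_test'[where g="\<lambda>k. (1 / PP N) * (1/2) ^ k"])
     (use ff_geom ff_nonneg in \<open>auto simp: summable_geometric\<close>)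

lemma summable_ff: "summable ff" using summable_shift[of 0] by simp

lemma AA_eq: "real (AA N) = PP N * (\<Sum>n<N. ff n)"
proof (induction N)
  case 0 then show ?case by simp
next
  case (Suc N)
  have qp: "real (Qseq (Suc N)) > 0" using seq_props(1)[of N] by simp
  show ?case using Suc PP_pos[of N] qp
    by (simp add: PP_Suc ff_def field_simps)
qed

lemma RR_eq: "RR N = PP N * (\<Sum>k. ff (k + N))"
proof -
  have "x_ex = (\<Sum>k. ff (k + N)) + (\<Sum>n<N. ff n)"
    unfolding x_ex_ff by (rule suminf_split_initial_segment[OF summable_ff])
  then show ?thesis unfolding RR_def AA_eq by (metis add_diff_cancel_right' distrib_left)
qed

lemma RR_nonneg: "0 \<le> RR N"
  unfolding RR_eq using PP_pos[of N] suminf_nonneg[OF summable_shift, of N] ff_nonneg by simp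

lemma RR_le2: "RR N \<le> 2"
proof -
  have "(\<Sum>k. ff (k + N)) \<le> (\<Sum>k. (1 / PP N) * (1/2) ^ k)"
    by (rule suminf_le) (use ff_geom summable_shift in \<open>auto simp: summable_geometric\<close>)
  also have "\<dots> = 2 / PP N" using suminf_divide[OF summable_geometric[of "1/2::real"], of "PP N"] suminf_geometric[of "1/2::real"] by simp
  finally show ?thesis unfolding RR_eq using PP_pos[of N] by (simp add: field_simps)
qed

lemma RR_rec: "RR (Suc N) = real (Qseq (Suc N)) * RR N - real (Eseq (Suc N))"
  unfolding RR_def by (simp add: PP_Suc algebra_simps)

lemma RR_le1: "RR N \<le> 1"
proof -
  have qp: "real (Qseq (Suc N)) > 0" using seq_props(1)[of N] by simp
  have "real (Qseq (Suc N)) * RR N = real (Eseq (Suc N)) + RR (Suc N)" using RR_rec[of N] by simp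
  also have "\<dots> \<le> real (Qseq (Suc N))" using RR_le2[of "Suc N"] seq_props(2)[of N] by simp
  finally show ?thesis using qp by simp
qed

lemma RR_bounds: "real (Eseq (Suc N)) \<le> real (Qseq (Suc N)) * RR N"
   "real (Qseq (Suc N)) * RR N \<le> real (Eseq (Suc N)) + 1"
  using RR_rec[of N] RR_le1[of "Suc N"] RR_nonneg[of "Suc N"] by simp_all

lemma RR_lt1: "RR N < 1"
proof -
  have qp: "real (Qseq (Suc N)) > 0" using seq_props(1)[of N] by simp
  have e: "real (Eseq (Suc N) + 2) \<le> real (Qseq (Suc N))" using seq_props(2)[of N] by (simp only: of_nat_le_iff)
  have "real (Qseq (Suc N)) * RR N < real (Qseq (Suc N))" using RR_bounds(2)[of N] e by linarith
  then show ?thesis using qp by simp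
qed

lemma RR_block:
  assumes "k \<le> m"
  shows "real k / real (Suc m) \<le> RR (Tri m + k)" "RR (Tri m + k) < real (Suc k) / real (Suc m)"
proof -
  note v = seq_vals[OF assms refl]
  have a: "2 * real k \<le> 2 * real (Suc m) * RR (Tri m + k)"
    using RR_bounds(1)[of "Tri m + k"] v by simp
  have b: "2 * real (Suc m) * RR (Tri m + k) \<le> 2 * real k + 1"
    using RR_bounds(2)[of "Tri m + k"] v by simp
  show "real k / real (Suc m) \<le> RR (Tri m + k)" using a by (simp add: field_simps)
  show "RR (Tri m + k) < real (Suc k) / real (Suc m)" using b by (simp add: field_simps)
qed

lemma AA_even: "even (AA N)"
  by (induction N) (use seq_props in auto)

lemma T_x: "T_Q Qseq N x_ex = RR N"
proof -
  have "T_Q Qseq N x_ex = frac (RR N + real (AA N))"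
    unfolding T_Q_def RR_def PP_def by simp
  also have "\<dots> = frac (RR N)" by (simp add: frac_def)
  also have "\<dots> = RR N" using RR_nonneg RR_lt1 frac_eq by blast
  finally show ?thesis .
qed

lemma T_x2: "T_Q Qseq N (x_ex / 2) = RR N / 2"
proof -
  obtain c where c: "AA N = 2 * c" using AA_even by blast
  have "T_Q Qseq N (x_ex / 2) = frac (RR N / 2 + real c)"
    unfolding T_Q_def using c by (simp add: RR_def PP_def field_simps)
  also have "\<dots> = frac (RR N / 2)" by (simp add: frac_def)
  also have "\<dots> = RR N / 2" using RR_nonneg[of N] RR_lt1[of N] frac_eq by simp
  finally show ?thesis .
qed



lemma card_sum: "real (card {n. n < (N::nat) \<and> P n}) = (\<Sum>n<N. if P n then 1 else 0)"
proof -
  have "{n. n < N \<and> P n} = {n \<in> {..<N}. P n}" by auto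
  then show ?thesis using sum.inter_filter[of "{..<N}" "\<lambda>_. 1::real" P] by simp
qed

lemma real_nat_diff: "0 \<le> (y::int) \<Longrightarrow> 0 \<le> x \<Longrightarrow> real (nat x - nat y) = max 0 (real_of_int (x - y))"
  by (cases "y \<le> x") (auto simp: of_nat_diff)

lemma block_count:
  fixes v :: "nat \<Rightarrow> real"
  assumes ab: "0 \<le> a" "a < b" "b \<le> 1" and n: "n > 0"
    and V: "\<And>k. k < n \<Longrightarrow> real k / n \<le> v k \<and> v k < real (Suc k) / n"
  shows "\<bar>(\<Sum>k<n. if a \<le> v k \<and> v k < b then 1 else 0) - real n * (b - a)\<bar> \<le> 2"
proof -
  define S where "S = {k. k < n \<and> a \<le> v k \<and> v k < b}"
  have cs: "(\<Sum>k<n. if a \<le> v k \<and> v k < b then 1 else 0) = real (card S)"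
    unfolding S_def by (rule card_sum[symmetric])
  have np: "real n > 0" using n by simp
  have na: "0 \<le> real n * a" using ab by simp
  have nb: "real n * b \<le> real n" using ab np by simp
  have nbp: "0 \<le> real n * b" using ab np by simp
  have f1: "0 \<le> \<lfloor>real n * a\<rfloor>" "0 \<le> \<lceil>real n * a\<rceil>" "0 \<le> \<lfloor>real n * b\<rfloor>" "0 \<le> \<lceil>real n * b\<rceil>"
    using na nbp by auto
  have f2: "real_of_int \<lfloor>real n * a\<rfloor> > real n * a - 1" "real_of_int \<lceil>real n * a\<rceil> < real n * a + 1"
     "real_of_int \<lfloor>real n * b\<rfloor> > real n * b - 1" "real_of_int \<lceil>real n * b\<rceil> < real n * b + 1"
    by linarith+
  have up: "S \<subseteq> {nat \<lfloor>real n * a\<rfloor> ..< nat \<lceil>real n * b\<rceil>}"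
  proof
    fix k assume "k \<in> S"
    then have k: "k < n" "a \<le> v k" "v k < b" unfolding S_def by auto
    have "a < real (Suc k) / n" using V[OF k(1)] k by linarith
    then have "real n * a < real k + 1" using np by (simp add: field_simps)
    then have "\<lfloor>real n * a\<rfloor> \<le> int k" by linarith
    moreover have "real k / n < b" using V[OF k(1)] k by linarith
    then have "real k < real n * b" using np by (simp add: field_simps)
    then have "int k < \<lceil>real n * b\<rceil>" by linarith
    ultimately show "k \<in> {nat \<lfloor>real n * a\<rfloor> ..< nat \<lceil>real n * b\<rceil>}" by auto
  qed
  have lo: "{nat \<lceil>real n * a\<rceil> ..< nat \<lfloor>real n * b\<rfloor>} \<subseteq> S"
  proof
    fix k assume "k \<in> {nat \<lceil>real n * a\<rceil> ..< nat \<lfloor>real n * b\<rfloor>}"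
    then have k1: "real n * a \<le> real k" and k2: "real k + 1 \<le> real n * b"
      by (auto simp: nat_le_iff zless_nat_eq_int_zless) linarith+
    have kn: "k < n" using k2 nb by linarith
    have "a \<le> real k / n" using k1 np by (simp add: field_simps)
    moreover have "real (Suc k) / n \<le> b" using k2 np by (simp add: field_simps)
    ultimately show "k \<in> S" unfolding S_def using V[OF kn] kn by auto
  qed
  have fS: "finite S" unfolding S_def by auto
  have c1: "real (card S) \<le> real n * (b - a) + 2"
  proof -
    have "card S \<le> nat \<lceil>real n * b\<rceil> - nat \<lfloor>real n * a\<rfloor>"
      using card_mono[OF _ up] by simp
    then have "real (card S) \<le> real (nat \<lceil>real n * b\<rceil> - nat \<lfloor>real n * a\<rfloor>)" by simp
    also have "\<dots> \<le> real n * b + 1 - (real n * a - 1)"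
      unfolding real_nat_diff[OF f1(1) f1(4)] max.bounded_iff
      using f2 ab np by (intro conjI) (simp_all, linarith?)
    finally show ?thesis by (simp add: algebra_simps)
  qed
  have c2: "real n * (b - a) - 2 \<le> real (card S)"
  proof -
    have "nat \<lfloor>real n * b\<rfloor> - nat \<lceil>real n * a\<rceil> \<le> card S"
      using card_mono[OF fS lo] by simp
    then have "real (nat \<lfloor>real n * b\<rfloor> - nat \<lceil>real n * a\<rceil>) \<le> real (card S)" by linarith
    moreover have "real n * b - 1 - (real n * a + 1) \<le> real (nat \<lfloor>real n * b\<rfloor> - nat \<lceil>real n * a\<rceil>)"
      unfolding real_nat_diff[OF f1(2) f1(3)]
      using f2(2,3) by (intro max.coboundedI2) (metis of_int_diff add_mono_thms_linordered_field(5) diff_mono less_le_not_le)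
    ultimately show ?thesis by (simp add: algebra_simps)
  qed
  show ?thesis unfolding cs using c1 c2 by linarith
qed



lemma sum_add_split: "(\<Sum>n<(a::nat)+b. g n) = (\<Sum>n<a. g n) + (\<Sum>k<b. g (a+k))"
  by (induction b) (auto simp: add.commute add.left_commute)

lemma sum_split_Tri:
  "(\<Sum>n<Tri m + j. g n) = (\<Sum>i<m. \<Sum>k<Suc i. g (Tri i + k)) + (\<Sum>k<j. g (Tri m + k))"
proof -
  have "(\<Sum>n<Tri m. g n) = (\<Sum>i<m. \<Sum>k<Suc i. g (Tri i + k))"
  proof (induction m)
    case 0 then show ?case by simp
  next
    case (Suc m)
    have "(\<Sum>n<Tri (Suc m). g n) = (\<Sum>n<Tri m + Suc m. g n)" by simp
    also have "\<dots> = (\<Sum>n<Tri m. g n) + (\<Sum>k<Suc m. g (Tri m + k))" by (rule sum_add_split)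
    finally show ?case using Suc by simp
  qed
  then show ?thesis by (simp add: sum_add_split)
qed

lemma Tri_real: "real (Tri m) = (\<Sum>i<m. real (Suc i))"
  by (induction m) auto

lemma Tri_sq: "2 * Tri m = m * (m + 1)"
  by (induction m) auto

lemma ud_blocks:
  fixes u :: "nat \<Rightarrow> real"
  assumes H: "\<And>m k. k \<le> m \<Longrightarrow> real k / real (Suc m) \<le> u (Tri m + k) \<and> u (Tri m + k) < real (Suc k) / real (Suc m)"
  shows "uniformly_distributed_mod1 u"
  unfolding uniformly_distributed_mod1_def
proof (intro allI impI)
  fix a b :: real assume ab: "0 \<le> a \<and> a < b \<and> b \<le> 1"
  have fr: "frac (u n) = u n" for n
  proof -
    obtain m k where mk: "k \<le> m" "n = Tri m + k" using Tri_decomp by blast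
    have "real (Suc k) / real (Suc m) \<le> 1" using mk by simp
    moreover have "0 \<le> real k / real (Suc m)" by simp
    ultimately have "0 \<le> u n" "u n < 1" using H[OF mk(1)] unfolding mk(2) by linarith+
    then show ?thesis using frac_eq by blast
  qed
  define g where "g n = (if a \<le> u n \<and> u n < b then 1 else (0::real))" for n
  have g01: "0 \<le> g n" "g n \<le> 1" for n unfolding g_def by auto
  have bound: "\<bar>(\<Sum>n<N. g n) - real N * (b - a)\<bar> \<le> 3 * sqrt (2 * real N)" for N
  proof -
    obtain m j where mj: "j \<le> m" "N = Tri m + j" using Tri_decomp by blast
    have blk: "\<bar>(\<Sum>k<Suc i. g (Tri i + k)) - real (Suc i) * (b - a)\<bar> \<le> 2" for i
      unfolding g_def
      by (rule block_count[where v="\<lambda>k. u (Tri i + k)"]) (use ab H in auto)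
    have p1: "0 \<le> (\<Sum>k<j. g (Tri m + k))" by (rule sum_nonneg) (use g01 in auto)
    have p2: "(\<Sum>k<j. g (Tri m + k)) \<le> real j"
      using sum_bounded_above[of "{..<j}" "\<lambda>k. g (Tri m + k)" 1] g01 by auto
    have ba: "0 \<le> b - a" "b - a \<le> 1" using ab by auto
    have p: "\<bar>(\<Sum>k<j. g (Tri m + k)) - real j * (b - a)\<bar> \<le> real j"
      using p1 p2 ba mult_left_le[of "b-a" "real j"] mult_nonneg_nonneg[of "real j" "b-a"]
      unfolding abs_le_iff by linarith
    have e1: "(\<Sum>i<m. (\<Sum>k<Suc i. g (Tri i + k)) - real (Suc i) * (b - a))
       = (\<Sum>i<m. (\<Sum>k<Suc i. g (Tri i + k))) - real (Tri m) * (b - a)"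
      unfolding Tri_real by (simp only: sum_subtractf sum_distrib_right)
    have "(\<Sum>n<N. g n) - real N * (b - a)
       = (\<Sum>i<m. (\<Sum>k<Suc i. g (Tri i + k)) - real (Suc i) * (b - a))
         + ((\<Sum>k<j. g (Tri m + k)) - real j * (b - a))"
      unfolding mj(2) sum_split_Tri of_nat_add e1
      by (simp add: algebra_simps del: sum.lessThan_Suc)
    also have "\<bar>\<dots>\<bar> \<le> (\<Sum>i<m. \<bar>(\<Sum>k<Suc i. g (Tri i + k)) - real (Suc i) * (b - a)\<bar>)
         + \<bar>(\<Sum>k<j. g (Tri m + k)) - real j * (b - a)\<bar>"
      by (rule order_trans[OF abs_triangle_ineq add_right_mono[OF sum_abs]])
    also have "\<dots> \<le> 2 * real m + real j"
      using sum_bounded_above[of "{..<m}" "\<lambda>i. \<bar>(\<Sum>k<Suc i. g (Tri i + k)) - real (Suc i) * (b - a)\<bar>" 2, OF blk] p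
      by (simp del: sum.lessThan_Suc)
    also have "\<dots> \<le> 3 * real m" using mj by simp
    also have "\<dots> \<le> 3 * sqrt (2 * real N)"
    proof -
      have "real m * real m \<le> 2 * real N"
      proof -
        have "m * m \<le> 2 * N" using Tri_sq[of m] mj by (simp add: algebra_simps)
        then show ?thesis by (metis of_nat_le_iff of_nat_mult of_nat_numeral)
      qed
      then have "sqrt (real m * real m) \<le> sqrt (2 * real N)" by (rule real_sqrt_le_mono)
      then show ?thesis by simp
    qed
    finally show ?thesis .
  qed
  have lim0: "(\<lambda>N. (\<Sum>n<N. g n) / real N - (b - a)) \<longlonglongrightarrow> 0"
  proof (rule tendsto_0_le[where K=1])
    show "\<forall>\<^sub>F N in sequentially. norm ((\<Sum>n<N. g n) / real N - (b - a)) \<le> norm (3 * sqrt 2 / sqrt (real N)) * 1"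
      using eventually_gt_at_top[of "0::nat"]
    proof eventually_elim
      case (elim N)
      have Np: "real N > 0" using elim by simp
      have "(\<Sum>n<N. g n) / real N - (b - a) = ((\<Sum>n<N. g n) - real N * (b - a)) / real N"
        using Np by (simp add: field_simps)
      also have "norm \<dots> \<le> 3 * sqrt (2 * real N) / real N"
        using bound[of N] Np by (simp add: divide_right_mono)
      also have "\<dots> = 3 * sqrt 2 / sqrt (real N)"
        using Np by (simp add: real_sqrt_mult field_simps)
      finally show ?case by simp
    qed
    show "(\<lambda>N. 3 * sqrt 2 / sqrt (real N)) \<longlonglongrightarrow> 0" by real_asymp
  qed
  have cs: "real (card {n. n < N \<and> a \<le> frac (u n) \<and> frac (u n) < b}) = (\<Sum>n<N. g n)" for N
    unfolding fr g_def by (rule card_sum)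
  show "(\<lambda>N. real (card {n. n < N \<and> a \<le> frac (u n) \<and> frac (u n) < b}) / real N) \<longlonglongrightarrow> b - a"
    unfolding cs using tendsto_add[OF lim0 tendsto_const[of "b - a"]] by simp
qed


theorem mainTheorem4:
  shows "Q_distribution_normal Qseq x_ex \<and> \<not> Q_distribution_normal Qseq (x_ex / 2)"
proof
  show "Q_distribution_normal Qseq x_ex"
    unfolding Q_distribution_normal_def T_x
    by (rule ud_blocks) (use RR_block in auto)
next
  show "\<not> Q_distribution_normal Qseq (x_ex / 2)"
  proof
    assume "Q_distribution_normal Qseq (x_ex / 2)"
    then have L: "(\<lambda>N. real (card {n. n < N \<and> 3/4 \<le> frac (RR n / 2) \<and> frac (RR n / 2) < 1}) / real N)
        \<longlonglongrightarrow> 1 - 3/4"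
      unfolding Q_distribution_normal_def uniformly_distributed_mod1_def T_x2
      by (elim allE[of _ "3/4"] allE[of _ 1]) simp
    have fr: "frac (RR n / 2) = RR n / 2" for n
      using RR_nonneg[of n] RR_lt1[of n] frac_eq by simp
    have E: "{n. n < N \<and> 3/4 \<le> frac (RR n / 2) \<and> frac (RR n / 2) < 1} = {}" for N
    proof -
      have "\<not> (3/4 \<le> RR n / 2)" for n using RR_lt1[of n] by simp
      then show ?thesis unfolding fr by blast
    qed
    have "(\<lambda>N::nat. 0::real) \<longlonglongrightarrow> 1 - 3/4" using L unfolding E by simp
    then have "(0::real) = 1 - 3/4" using LIMSEQ_unique tendsto_const by blast
    then show False by simp
  qed
qed

end
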